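(* For every $n\geq 3$, the dihedral group $D_n\leq\mathrm{Sym}(n)$ (the group of rotations and reflections of a regular $n$-gon, acting on its $n$ vertices) has the strict EKR property.
   Context: For $G\leq \mathrm{Sym}(n)$: two permutations $\pi,\tau\in G$ intersect if $\pi\tau^{-1}$ has a fixed point in $\{1,\dots,n\}$. A subset of $G$ is intersecting if every pair of its elements intersect. $G$ has the EKR property if every intersecting subset of $G$ has size at most the size of the largest point-stabilizer in $G$. $G$ has the strict EKR property if it has the EKR property and the only intersecting subsets of maximum size in $G$ are the cosets of the point-stabilizers. *)

theory Defs
  imports "HOL-Combinatorics.Permutations"
begin

text \<open>Permutation groups are given as sets of functions nat \<Rightarrow> nat acting on a
finite point set Omega (here Omega = {1..n}); composition is function composition.\<close>

definition intersect :: "nat set \<Rightarrow> (nat \<Rightarrow> nat) \<Rightarrow> (nat \<Rightarrow> nat) \<Rightarrow> bool" where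
  "intersect \<Omega> \<pi> \<tau> \<longleftrightarrow> (\<exists>x\<in>\<Omega>. (\<pi> \<circ> inv \<tau>) x = x)"

definition intersecting :: "nat set \<Rightarrow> (nat \<Rightarrow> nat) set \<Rightarrow> bool" where
  "intersecting \<Omega> S \<longleftrightarrow> (\<forall>\<pi>\<in>S. \<forall>\<tau>\<in>S. intersect \<Omega> \<pi> \<tau>)"

definition stabilizer :: "(nat \<Rightarrow> nat) set \<Rightarrow> nat \<Rightarrow> (nat \<Rightarrow> nat) set" where
  "stabilizer G x = {g \<in> G. g x = x}"

definition max_stabilizer_size :: "nat set \<Rightarrow> (nat \<Rightarrow> nat) set \<Rightarrow> nat" where
  "max_stabilizer_size \<Omega> G = Max ((\<lambda>x. card (stabilizer G x)) ` \<Omega>)"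

definition EKR :: "nat set \<Rightarrow> (nat \<Rightarrow> nat) set \<Rightarrow> bool" where
  "EKR \<Omega> G \<longleftrightarrow> (\<forall>S. S \<subseteq> G \<and> intersecting \<Omega> S \<longrightarrow> card S \<le> max_stabilizer_size \<Omega> G)"

text \<open>Cosets of point stabilizers g G_x (for a stabilizer G_x, the right coset G_x g
equals the left coset g G_{g^{-1} x}, so left cosets cover all cosets).\<close>
definition stabilizer_coset :: "nat set \<Rightarrow> (nat \<Rightarrow> nat) set \<Rightarrow> (nat \<Rightarrow> nat) set \<Rightarrow> bool" where
  "stabilizer_coset \<Omega> G S \<longleftrightarrow>
     (\<exists>g\<in>G. \<exists>x\<in>\<Omega>. S = (\<lambda>h. g \<circ> h) ` stabilizer G x)"

definition strict_EKR :: "nat set \<Rightarrow> (nat \<Rightarrow> nat) set \<Rightarrow> bool" where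
  "strict_EKR \<Omega> G \<longleftrightarrow> EKR \<Omega> G \<and>
     (\<forall>S. S \<subseteq> G \<and> intersecting \<Omega> S \<and> card S = max_stabilizer_size \<Omega> G
          \<longrightarrow> stabilizer_coset \<Omega> G S)"

text \<open>Dihedral group D_n acting on the vertices 1..n of a regular n-gon
(vertex i adjacent to i+1 mod n). Rotations and reflections; identity outside {1..n}.\<close>
definition rotation :: "nat \<Rightarrow> nat \<Rightarrow> nat \<Rightarrow> nat" where
  "rotation n k x = (if x \<in> {1..n} then (x - 1 + k) mod n + 1 else x)"

definition reflection :: "nat \<Rightarrow> nat \<Rightarrow> nat \<Rightarrow> nat" where
  "reflection n k x = (if x \<in> {1..n} then (k + n - (x - 1)) mod n + 1 else x)"

definition dihedral :: "nat \<Rightarrow> (nat \<Rightarrow> nat) set" where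
  "dihedral n = rotation n ` {..<n} \<union> reflection n ` {..<n}"

end

theory Submission
  imports Defs "HOL-Number_Theory.Cong"
begin

lemma A1: "(y::nat) < n \<Longrightarrow> a < n \<Longrightarrow> b < n \<Longrightarrow> (y + a) mod n = (y + b) mod n \<Longrightarrow> a = b"
  using cong_add_lcancel_nat[of y a b n] unfolding cong_def by simp

lemma A2: "(y::nat) < n \<Longrightarrow> a < n \<Longrightarrow> b < n \<Longrightarrow> (a + n - y) mod n = (b + n - y) mod n \<Longrightarrow> a = b"
proof -
  assume y: "y < n" and a: "a < n" and b: "b < n" and e: "(a + n - y) mod n = (b + n - y) mod n"
  have "a + n - y = (n - y) + a" "b + n - y = (n - y) + b" using y by auto
  with e have "((n - y) + a) mod n = ((n - y) + b) mod n" by simp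
  thus ?thesis using cong_add_lcancel_nat[of "n - y" a b n] a b unfolding cong_def by simp
qed

lemma A3: "(y::nat) < n \<Longrightarrow> ((2*y) mod n + n - y) mod n = y"
proof -
  assume y: "y < n"
  have "(2*y) mod n + n - y = (2*y) mod n + (n - y)" using y by simp
  hence "((2*y) mod n + n - y) mod n = (2*y + (n - y)) mod n" by (simp add: mod_add_left_eq)
  also have "2*y + (n - y) = y + n" using y by simp
  finally show ?thesis using y by simp
qed

lemma A5: "(y::nat) < n \<Longrightarrow> k < n \<Longrightarrow> ((y + (n - k)) mod n + k) mod n = y"
  by (metis (no_types, opaque_lifting) add_diff_inverse_nat
    group_cancel.add2 mod_add_right_eq mod_add_self2 mod_less
    order_less_imp_not_less)

lemma A6: "(y::nat) < n \<Longrightarrow> k < n \<Longrightarrow> (k + n - (k + n - y) mod n) mod n = y"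
proof -
  assume y: "y < n" and k: "k < n"
  define z where "z = (k + n - y) mod n"
  have zn: "z < n" using y unfolding z_def by simp
  have "[k + n - z + z = y + (k + n - y)] (mod n)" using zn y by simp
  moreover have "[z = k + n - y] (mod n)" unfolding z_def cong_def by simp
  ultimately have "[k + n - z + z = y + z] (mod n)"
    by (meson cong_add_lcancel_nat cong_sym cong_trans cong_add cong_refl)
  hence "[k + n - z = y] (mod n)" using cong_add_rcancel_nat by blast
  thus ?thesis using y unfolding cong_def z_def by simp
qed

lemma A7: "(y::nat) < n \<Longrightarrow> a < n \<Longrightarrow> c < n \<Longrightarrow> ((c + n - y) mod n + a) mod n = ((a+c) mod n + n - y) mod n"
  by (metis add.commute[of a "(c + n - y) mod n"] add.commute[of c "n - y"]
    add.commute[of "(a + c) mod n" "n - y"]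
    group_cancel.add2[of "n - y + c" "n - y" c a]
    mod_add_right_eq[of a "c + n - y" n]
    mod_add_right_eq[of "n - y" "a + c" n] order_le_less[of y n]
    ordered_cancel_comm_monoid_diff_class.add_diff_assoc[of y n c]
    ordered_cancel_comm_monoid_diff_class.add_diff_assoc[of y n
      "(a + c) mod n"])

lemma rot_in: "x \<in> {1..n} \<Longrightarrow> rotation n k x \<in> {1..n}"
  unfolding rotation_def by (auto intro: Suc_leI)

lemma refl_in: "x \<in> {1..n} \<Longrightarrow> reflection n k x \<in> {1..n}"
  unfolding reflection_def by (auto intro: Suc_leI)

lemma rot_out: assumes "x \<notin> {1..n}" shows "rotation n k x = x"
  using assms unfolding rotation_def by (simp only: if_False)

lemma refl_out: assumes "x \<notin> {1..n}" shows "reflection n k x = x"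
  using assms unfolding reflection_def by (simp only: if_False)

lemma rot0: "rotation n 0 x = x"
  unfolding rotation_def by auto

lemma rot_param: "a < n \<Longrightarrow> b < n \<Longrightarrow> x \<in> {1..n} \<Longrightarrow> rotation n a x = rotation n b x \<Longrightarrow> a = b"
  unfolding rotation_def using A1[of "x - 1" n a b] by auto

lemma refl_param: "a < n \<Longrightarrow> b < n \<Longrightarrow> x \<in> {1..n} \<Longrightarrow> reflection n a x = reflection n b x \<Longrightarrow> a = b"
  unfolding reflection_def using A2[of "x - 1" n a b] by auto

lemma refl_fix_c: "x \<in> {1..n} \<Longrightarrow> reflection n (2*(x-1) mod n) x = x"
  unfolding reflection_def using A3[of "x - 1" n] by auto

lemma refl_fix: "c < n \<Longrightarrow> x \<in> {1..n} \<Longrightarrow> reflection n c x = x \<longleftrightarrow> c = 2*(x-1) mod n"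
proof
  assume c: "c < n" and x: "x \<in> {1..n}" and "reflection n c x = x"
  hence "reflection n c x = reflection n (2*(x-1) mod n) x" using refl_fix_c by simp
  thus "c = 2*(x-1) mod n" using refl_param[OF c _ x] x by auto
next
  assume "x \<in> {1..n}" "c = 2*(x-1) mod n"
  thus "reflection n c x = x" using refl_fix_c by simp
qed

lemma rot_surj: "k < n \<Longrightarrow> surj (rotation n k)"
proof -
  assume k: "k < n"
  have "rotation n k (rotation n (n - k) x) = x" for x
  proof (cases "x \<in> {1..n}")
    case True
    then show ?thesis unfolding rotation_def using A5[of "x - 1" n k] k
      by (auto intro: Suc_leI)
  next
    case False
    then show ?thesis by (simp add: rot_out)
  qed
  thus ?thesis by (metis surjI)
qed

lemma refl_surj: "k < n \<Longrightarrow> surj (reflection n k)"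
proof -
  assume k: "k < n"
  have "reflection n k (reflection n k x) = x" for x
  proof (cases "x \<in> {1..n}")
    case True
    then show ?thesis unfolding reflection_def using A6[of "x - 1" n k] k
      by (auto intro: Suc_leI)
  next
    case False
    then show ?thesis by (simp add: refl_out)
  qed
  thus ?thesis by (metis surjI)
qed

lemma dih_surj: "g \<in> dihedral n \<Longrightarrow> surj g"
  unfolding dihedral_def using rot_surj refl_surj by auto

lemma dih_out: "g \<in> dihedral n \<Longrightarrow> x \<notin> {1..n} \<Longrightarrow> g x = x"
  unfolding dihedral_def using rot_out refl_out by auto

lemma intersect_D:
  assumes "\<tau> \<in> dihedral n" "intersect {1..n} \<pi> \<tau>"
  shows "\<exists>y\<in>{1..n}. \<pi> y = \<tau> y"
proof -
  obtain x where x: "x \<in> {1..n}" "\<pi> (inv \<tau> x) = x"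
    using assms(2) unfolding intersect_def by auto
  have s: "\<tau> (inv \<tau> x) = x" using dih_surj[OF assms(1)] by (simp add: surj_f_inv_f)
  have "inv \<tau> x \<in> {1..n}"
  proof (rule ccontr)
    assume "inv \<tau> x \<notin> {1..n}"
    hence "\<tau> (inv \<tau> x) = inv \<tau> x" using dih_out[OF assms(1)] by blast
    thus False using s x \<open>inv \<tau> x \<notin> {1..n}\<close> by simp
  qed
  thus ?thesis using x s by metis
qed

lemma rot0_ne_refl:
  assumes n: "n \<ge> 3" "c < n"
  shows "rotation n 0 \<noteq> reflection n c"
proof
  assume e: "rotation n 0 = reflection n c"
  have "reflection n c 1 = 1" "reflection n c 2 = 2" using e rot0 by metis+
  hence "c = 2*(1-1) mod n" "c = 2*(2-1) mod n" using refl_fix[OF n(2)] n by auto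
  thus False using n by simp
qed

lemma stab:
  assumes n: "n \<ge> 3" and x: "x \<in> {1..n}"
  shows "stabilizer (dihedral n) x = {rotation n 0, reflection n (2*(x-1) mod n)}"
proof
  show "stabilizer (dihedral n) x \<subseteq> {rotation n 0, reflection n (2*(x-1) mod n)}"
  proof
    fix g assume g: "g \<in> stabilizer (dihedral n) x"
    hence gd: "g \<in> dihedral n" and gx: "g x = x" unfolding stabilizer_def by auto
    from gd consider k where "k < n" "g = rotation n k" | k where "k < n" "g = reflection n k"
      unfolding dihedral_def by auto
    thus "g \<in> {rotation n 0, reflection n (2*(x-1) mod n)}"
    proof cases
      case 1
      hence "rotation n k x = rotation n 0 x" using gx rot0 by simp
      hence "k = 0" using rot_param[OF 1(1) _ x] n by simp
      thus ?thesis using 1 by simp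
    next
      case 2
      thus ?thesis using gx refl_fix[OF 2(1) x] by simp
    qed
  qed
next
  have "rotation n 0 \<in> dihedral n" "reflection n (2*(x-1) mod n) \<in> dihedral n"
    unfolding dihedral_def using n by auto
  thus "{rotation n 0, reflection n (2*(x-1) mod n)} \<subseteq> stabilizer (dihedral n) x"
    unfolding stabilizer_def using rot0 refl_fix_c[OF x] by auto
qed

lemma stab_card:
  assumes n: "n \<ge> 3" and x: "x \<in> {1..n}"
  shows "card (stabilizer (dihedral n) x) = 2"
  using stab[OF assms] rot0_ne_refl[OF n, of "2*(x-1) mod n"] n by simp

lemma mss:
  assumes n: "n \<ge> 3"
  shows "max_stabilizer_size {1..n} (dihedral n) = 2"
proof -
  have "(\<lambda>x. card (stabilizer (dihedral n) x)) ` {1..n} = {2}"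
    using stab_card[OF n] n by force
  thus ?thesis unfolding max_stabilizer_size_def by simp
qed

lemma comp_rot_refl:
  assumes "a < n" "c < n"
  shows "rotation n a \<circ> reflection n c = reflection n ((a+c) mod n)"
proof
  fix x
  show "(rotation n a \<circ> reflection n c) x = reflection n ((a+c) mod n) x"
  proof (cases "x \<in> {1..n}")
    case True
    then show ?thesis using refl_in[OF True, of c] A7[of "x - 1" n a c] assms
      unfolding rotation_def reflection_def by auto
  next
    case False
    then show ?thesis by (simp add: rot_out refl_out)
  qed
qed

theorem proposition6:
  fixes n :: nat
  assumes "n \<ge> 3"
  shows "strict_EKR {1..n} (dihedral n)"
proof -
  have n: "n \<ge> 3" by fact
  define R where "R = rotation n ` {..<n}"
  define F where "F = reflection n ` {..<n}"
  have DRF: "dihedral n = R \<union> F" unfolding dihedral_def R_def F_def by simp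
  have fin: "finite (dihedral n)" unfolding dihedral_def by simp
  have key: "card (S \<inter> R) \<le> 1 \<and> card (S \<inter> F) \<le> 1"
    if S: "S \<subseteq> dihedral n" "intersecting {1..n} S" for S
  proof -
    have finS: "finite S" using S(1) fin finite_subset by blast
    have hR: "\<forall>g\<in>S \<inter> R. \<forall>h\<in>S \<inter> R. g = h"
    proof (intro ballI)
      fix g h assume g: "g \<in> S \<inter> R" and h: "h \<in> S \<inter> R"
      obtain a where a: "a < n" "g = rotation n a" using g unfolding R_def by auto
      obtain b where b: "b < n" "h = rotation n b" using h unfolding R_def by auto
      have "intersect {1..n} g h" using S(2) g h unfolding intersecting_def by auto
      then obtain y where y: "y \<in> {1..n}" "g y = h y" using intersect_D[of h n g] h S(1) by (meson IntD1 in_mono)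
      hence "a = b" using rot_param[OF a(1) b(1) y(1)] a b by simp
      thus "g = h" using a b by simp
    qed
    have hF: "\<forall>g\<in>S \<inter> F. \<forall>h\<in>S \<inter> F. g = h"
    proof (intro ballI)
      fix g h assume g: "g \<in> S \<inter> F" and h: "h \<in> S \<inter> F"
      obtain a where a: "a < n" "g = reflection n a" using g unfolding F_def by auto
      obtain b where b: "b < n" "h = reflection n b" using h unfolding F_def by auto
      have "intersect {1..n} g h" using S(2) g h unfolding intersecting_def by auto
      then obtain y where y: "y \<in> {1..n}" "g y = h y" using intersect_D[of h n g] h S(1) by (meson IntD1 in_mono)
      hence "a = b" using refl_param[OF a(1) b(1) y(1)] a b by simp
      thus "g = h" using a b by simp
    qed
    show ?thesis using hR hF finS by (simp add: card_le_Suc0_iff_eq)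
  qed
  have cardS: "card S \<le> card (S \<inter> R) + card (S \<inter> F)" if S: "S \<subseteq> dihedral n" for S
  proof -
    have "S = (S \<inter> R) \<union> (S \<inter> F)" using S DRF by auto
    hence "card S = card ((S \<inter> R) \<union> (S \<inter> F))" by simp
    also have "\<dots> \<le> card (S \<inter> R) + card (S \<inter> F)" by (rule card_Un_le)
    finally show ?thesis .
  qed
  have ekr: "EKR {1..n} (dihedral n)"
    unfolding EKR_def mss[OF n]
  proof (intro allI impI)
    fix S assume SS: "S \<subseteq> dihedral n \<and> intersecting {1..n} S"
    have k1: "card (S \<inter> R) \<le> 1" "card (S \<inter> F) \<le> 1" using key SS by blast+
    have k2: "card S \<le> card (S \<inter> R) + card (S \<inter> F)" using cardS SS by blast
    show "card S \<le> 2" using k1 k2 by linarith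
  qed
  have strict: "stabilizer_coset {1..n} (dihedral n) S"
    if S: "S \<subseteq> dihedral n" "intersecting {1..n} S" "card S = 2" for S
  proof -
    have c1: "card (S \<inter> R) = 1" "card (S \<inter> F) = 1" using key[OF S(1,2)] cardS[OF S(1)] S(3) by auto
    obtain g where g: "S \<inter> R = {g}" using c1(1) card_1_singletonE by blast
    obtain h where h: "S \<inter> F = {h}" using c1(2) card_1_singletonE by blast
    have SE: "S = {g, h}" using g h S(1) DRF by auto
    obtain a where a: "a < n" "g = rotation n a" using g unfolding R_def by auto
    obtain b where b: "b < n" "h = reflection n b" using h unfolding F_def by auto
    have gS: "g \<in> S" "h \<in> S" using SE by auto
    have gD: "g \<in> dihedral n" "h \<in> dihedral n" using gS S(1) by auto
    have "intersect {1..n} g h" using S(2) gS unfolding intersecting_def by auto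
    then obtain y where y: "y \<in> {1..n}" "g y = h y" using intersect_D[of h n g] gD by auto
    define c where "c = 2*(y-1) mod n"
    have cn: "c < n" unfolding c_def using n by simp
    have id0: "rotation n 0 = id" using rot0 by fastforce
    have comp: "g \<circ> reflection n c = reflection n ((a+c) mod n)"
      using comp_rot_refl[OF a(1) cn] a by simp
    have "reflection n ((a+c) mod n) y = g (reflection n c y)" using comp by (metis comp_apply)
    also have "\<dots> = g y" using refl_fix_c[OF y(1)] unfolding c_def by simp
    also have "\<dots> = reflection n b y" using y b by simp
    finally have "(a+c) mod n = b" using refl_param[OF _ b(1) y(1)] n by simp
    hence "(\<lambda>k. g \<circ> k) ` stabilizer (dihedral n) y = S"
      using stab[OF n y(1)] SE comp id0 b unfolding c_def by auto
    thus ?thesis unfolding stabilizer_coset_def using gD y by blast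
  qed
  show ?thesis unfolding strict_EKR_def mss[OF n] using ekr strict by blast
qed

end
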